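(* Let $M,M'\in\mathrm{Mat}(2,\mathbb{Z})$ have the same trace and determinant, and assume $\mathrm{mgcd}(M)=\mathrm{mgcd}(M')$. Then for every integer $n\ge2$, the reductions mod $n$ of $M$ and $M'$ are $\mathrm{Mat}(2,\mathbb{Z}_n)^\times$-conjugate.
   Context: For $M=\begin{pmatrix}a&b\\c&d\end{pmatrix}$, $\mathrm{mgcd}(M)=\gcd(b,c,d-a)\ge0$, equal to $0$ iff $b=c=d-a=0$. $\mathrm{Mat}(2,\mathbb{Z}_n)^\times$ is the group of invertible $2\times2$ matrices over $\mathbb{Z}_n=\mathbb{Z}/n\mathbb{Z}$. *)

theory Defs
  imports "HOL-Analysis.Analysis" "HOL-Number_Theory.Cong"
begin

text \<open>Integer 2x2 matrices are modelled as int^2^2 (rows/columns indexed by 1, 2).\<close>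

definition mgcd :: "int^2^2 \<Rightarrow> int" where
  "mgcd M = gcd (gcd (M$1$2) (M$2$1)) (M$2$2 - M$1$1)"

text \<open>Entrywise congruence mod n: equality of the reductions in Mat(2, Z_n).\<close>
definition mat_cong :: "int \<Rightarrow> int^2^2 \<Rightarrow> int^2^2 \<Rightarrow> bool" where
  "mat_cong n A B \<longleftrightarrow> (\<forall>i j. [A$i$j = B$i$j] (mod n))"

text \<open>Reductions mod n are conjugate by an element of Mat(2,Z_n)^x:
  there are P, Q whose reductions are mutually inverse with P M Q = M' mod n.\<close>
definition conj_mod :: "int \<Rightarrow> int^2^2 \<Rightarrow> int^2^2 \<Rightarrow> bool" where
  "conj_mod n M M' \<longleftrightarrow> (\<exists>P Q :: int^2^2.
      mat_cong n (P ** Q) (mat 1) \<and> mat_cong n (Q ** P) (mat 1) \<and>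
      mat_cong n (P ** M ** Q) M')"

end

theory Submission
  imports Defs "HOL-Computational_Algebra.Primes"
begin


lemma not_coprime_prime:
  fixes a n :: int assumes "n \<noteq> 0" "\<not> coprime a n"
  shows "\<exists>p. prime p \<and> p dvd a \<and> p dvd n"
proof -
  have "gcd a n \<noteq> 0" using assms by simp
  moreover have "\<not> is_unit (gcd a n)" using assms by (simp add: coprime_iff_gcd_eq_1 is_unit_gcd)
  ultimately obtain p where "p dvd gcd a n" "prime p" using prime_divisor_exists by blast
  thus ?thesis by auto
qed

lemma form_coprime:
  fixes A B C n :: int
  assumes n: "n \<noteq> 0" and g: "\<And>p. prime p \<Longrightarrow> p dvd A \<Longrightarrow> p dvd B \<Longrightarrow> p dvd C \<Longrightarrow> False"
  shows "\<exists>x y. coprime (A*x^2 + B*x*y + C*y^2) n"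
proof -
  define S where "S = prime_factors n"
  define T1 where "T1 = {p\<in>S. \<not> p dvd A}"
  define T2 where "T2 = {p\<in>S. p dvd A \<and> \<not> p dvd C}"
  define y where "y = \<Prod>T1"
  define x where "x = \<Prod>T2"
  have fin: "finite T1" "finite T2" unfolding T1_def T2_def S_def by auto
  have pr: "\<And>q. q \<in> T1 \<Longrightarrow> prime q" "\<And>q. q \<in> T2 \<Longrightarrow> prime q"
    unfolding T1_def T2_def S_def by auto
  have mem: "p dvd \<Prod>T \<longleftrightarrow> p \<in> T" if "prime p" "finite T" "\<And>q. q \<in> T \<Longrightarrow> prime q" for p T
    using that prime_dvd_prod_iff[of T p id] primes_dvd_imp_eq by auto
  have "coprime (A*x^2 + B*x*y + C*y^2) n"
  proof (rule ccontr)
    assume "\<not> ?thesis"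
    then obtain p where p: "prime p" "p dvd A*x^2 + B*x*y + C*y^2" "p dvd n"
      using not_coprime_prime n by blast
    have pS: "p \<in> S" unfolding S_def using p n by (simp add: in_prime_factors_iff)
    have px: "p dvd x \<longleftrightarrow> p \<in> T2" unfolding x_def using mem[OF p(1) fin(2) pr(2)] by simp
    have py: "p dvd y \<longleftrightarrow> p \<in> T1" unfolding y_def using mem[OF p(1) fin(1) pr(1)] by simp
    show False
    proof (cases "p dvd A")
      case False
      hence "p dvd y" "\<not> p dvd x" using px py pS unfolding T1_def T2_def by auto
      hence "p dvd B*x*y + C*y^2" by (simp add: power2_eq_square)
      hence "p dvd A*x^2" using p(2) by (metis add.assoc dvd_add_left_iff)
      thus False using False \<open>\<not> p dvd x\<close> p(1)
        by (metis prime_dvd_mult_iff prime_dvd_power)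
    next
      case True
      show False
      proof (cases "p dvd C")
        case False
        hence "p dvd x" "\<not> p dvd y" using True px py pS unfolding T1_def T2_def by auto
        hence "p dvd A*x^2 + B*x*y" by (simp add: power2_eq_square)
        hence "p dvd C*y^2" using p(2) by (metis dvd_add_right_iff)
        thus False using False \<open>\<not> p dvd y\<close> p(1)
          by (metis prime_dvd_mult_iff prime_dvd_power)
      next
        case pC: True
        hence nB: "\<not> p dvd B" using g p(1) True by blast
        have "\<not> p dvd x" "\<not> p dvd y" using True pC px py pS unfolding T1_def T2_def by auto
        have "p dvd A*x^2 + C*y^2" using True pC by simp
        hence "p dvd B*x*y" using p(2)
          by (metis add.commute add.left_commute dvd_add_right_iff)
        thus False using nB \<open>\<not> p dvd x\<close> \<open>\<not> p dvd y\<close> p(1)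
          by (metis prime_dvd_mult_iff)
      qed
    qed
  qed
  thus ?thesis by blast
qed



definition mk2 :: "int \<Rightarrow> int \<Rightarrow> int \<Rightarrow> int \<Rightarrow> int^2^2" where
  "mk2 a b c d = (\<chi> i j. if i = 1 then (if j = 1 then a else b) else (if j = 1 then c else d))"

lemma mk2_nth[simp]: "mk2 a b c d $1$1 = a" "mk2 a b c d $1$2 = b" "mk2 a b c d $2$1 = c" "mk2 a b c d $2$2 = d"
  by (simp_all add: mk2_def)

lemma mk2_eta: "M = mk2 (M$1$1) (M$1$2) (M$2$1) (M$2$2)"
  by (simp add: vec_eq_iff forall_2)

lemma mk2_mult: "mk2 a b c d ** mk2 a' b' c' d' = mk2 (a*a'+b*c') (a*b'+b*d') (c*a'+d*c') (c*b'+d*d')"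
  by (simp add: vec_eq_iff forall_2 matrix_matrix_mult_def sum_2)

lemma mk2_one: "mat 1 = mk2 1 0 0 1"
  by (simp add: vec_eq_iff forall_2 mat_def)

lemma mk2_det: "det (mk2 a b c d) = a*d - b*c" by (simp add: det_2)
lemma mk2_trace: "trace (mk2 a b c d) = a + d" by (simp add: trace_def sum_2)

lemma mat_cong_mk2: "mat_cong n (mk2 a b c d) (mk2 a' b' c' d') \<longleftrightarrow>
   [a = a'] (mod n) \<and> [b = b'] (mod n) \<and> [c = c'] (mod n) \<and> [d = d'] (mod n)"
  by (simp add: mat_cong_def forall_2)

lemma mc_refl: "mat_cong n A A" by (simp add: mat_cong_def)
lemma mc_sym: "mat_cong n A B \<Longrightarrow> mat_cong n B A" by (simp add: mat_cong_def cong_sym)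
lemma mc_trans: "mat_cong n A B \<Longrightarrow> mat_cong n B C \<Longrightarrow> mat_cong n A C"
  unfolding mat_cong_def using cong_trans by blast
lemma mc_mult: "mat_cong n A B \<Longrightarrow> mat_cong n C D \<Longrightarrow> mat_cong n (A ** C) (B ** D)"
  unfolding mat_cong_def matrix_matrix_mult_def
  by (auto intro!: cong_sum cong_mult)

lemma combine:
  assumes "mat_cong n (P ** Q) (mat 1)" "mat_cong n (Q ** P) (mat 1)"
    "mat_cong n (P' ** Q') (mat 1)" "mat_cong n (Q' ** P') (mat 1)"
    "M ** P = P ** K" "M' ** P' = P' ** K"
  shows "conj_mod n M M'"
  unfolding conj_mod_def
proof (intro exI conjI)
  let ?X = "P' ** Q" and ?Y = "P ** Q'"
  have "?X ** ?Y = P' ** (Q ** P) ** Q'" by (simp add: matrix_mul_assoc)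
  moreover have "mat_cong n (P' ** (Q ** P) ** Q') (P' ** mat 1 ** Q')"
    using assms(2) by (intro mc_mult mc_refl)
  ultimately show "mat_cong n (?X ** ?Y) (mat 1)" using assms(3)
    by (metis matrix_mul_rid mc_trans)
  have "?Y ** ?X = P ** (Q' ** P') ** Q" by (simp add: matrix_mul_assoc)
  moreover have "mat_cong n (P ** (Q' ** P') ** Q) (P ** mat 1 ** Q)"
    using assms(4) by (intro mc_mult mc_refl)
  ultimately show "mat_cong n (?Y ** ?X) (mat 1)" using assms(1)
    by (metis matrix_mul_rid mc_trans)
  have "?X ** M ** ?Y = P' ** Q ** (M ** P) ** Q'" by (simp add: matrix_mul_assoc)
  also have "\<dots> = P' ** (Q ** P) ** K ** Q'" by (simp add: assms(5) matrix_mul_assoc)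
  finally have e: "?X ** M ** ?Y = P' ** (Q ** P) ** K ** Q'" .
  have c1: "mat_cong n (P' ** (Q ** P) ** K ** Q') (P' ** mat 1 ** K ** Q')"
    using assms(2) by (intro mc_mult mc_refl)
  have eq: "P' ** mat 1 ** K ** Q' = M' ** (P' ** Q')"
  proof -
    have "P' ** mat 1 ** K ** Q' = (P' ** K) ** Q'" by (simp only: matrix_mul_rid)
    also have "\<dots> = (M' ** P') ** Q'" by (simp only: assms(6))
    also have "\<dots> = M' ** (P' ** Q')" by (simp only: matrix_mul_assoc)
    finally show ?thesis .
  qed
  have c2: "mat_cong n (M' ** (P' ** Q')) (M' ** mat 1)"
    using assms(3) by (intro mc_mult mc_refl)
  have "mat_cong n (?X ** M ** ?Y) (M' ** mat 1)" unfolding e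
    using mc_trans[OF c1[unfolded eq] c2] .
  thus "mat_cong n (?X ** M ** ?Y) M'" by (simp only: matrix_mul_rid)
qed



lemma mgcd_mk2: "mgcd (mk2 a b c d) = gcd (gcd b c) (d - a)" by (simp add: mgcd_def)

lemma reduce:
  fixes a b c d g n :: int
  assumes g: "g = gcd (gcd b c) (d - a)" "g > 0" and n: "n \<noteq> 0"
  shows "\<exists>P Q t D. mat_cong n (P**Q) (mat 1) \<and> mat_cong n (Q**P) (mat 1) \<and>
     mk2 a b c d ** P = P ** mk2 (a mod g) (-g*D) g (a mod g + g*t) \<and>
     a + d = 2*(a mod g) + g*t \<and> a*d - b*c = (a mod g)^2 + (a mod g)*g*t + g^2*D"
proof -
  define r where "r = a mod g"
  define h where "h = a div g"
  obtain \<beta> where \<beta>: "b = g*\<beta>" using g by (metis dvd_def gcd_dvd1 dvd_trans)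
  obtain \<gamma> where \<gamma>: "c = g*\<gamma>" using g by (metis dvd_def gcd_dvd1 gcd_dvd2 dvd_trans)
  obtain e where e: "d - a = g*e" using g by (metis dvd_def gcd_dvd2)
  have a: "a = r + g*h" unfolding r_def h_def by simp
  have d: "d = r + g*h + g*e" using a e by simp
  have "g = g * gcd (gcd \<beta> \<gamma>) e" using g(1) g(2) unfolding \<beta> \<gamma> e
    by (simp add: gcd_mult_left)
  hence g1: "gcd (gcd \<beta> \<gamma>) e = 1" using g(2) by simp
  have "\<exists>x y. coprime (\<gamma>*x^2 + e*x*y + (-\<beta>)*y^2) n"
  proof (rule form_coprime[OF n])
    fix p :: int assume "prime p" "p dvd \<gamma>" "p dvd e" "p dvd -\<beta>"
    hence "p dvd gcd (gcd \<beta> \<gamma>) e" by simp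
    thus False using g1 \<open>prime p\<close> using not_prime_unit by auto
  qed
  then obtain x y where xy: "coprime (\<gamma>*x^2 + e*x*y + (-\<beta>)*y^2) n" by blast
  define P where "P = mk2 x (h*x+\<beta>*y) y (\<gamma>*x+(h+e)*y)"
  define \<delta> where "\<delta> = x*(\<gamma>*x+(h+e)*y) - (h*x+\<beta>*y)*y"
  have "\<delta> = \<gamma>*x^2 + e*x*y + (-\<beta>)*y^2" unfolding \<delta>_def by (simp add: algebra_simps power2_eq_square)
  with xy have "coprime \<delta> n" by simp
  then obtain u where u: "[\<delta> * u = 1] (mod n)" using cong_solve_coprime_int by blast
  define Q where "Q = mk2 (u*(\<gamma>*x+(h+e)*y)) (-u*(h*x+\<beta>*y)) (-u*y) (u*x)"
  have "P ** Q = mk2 (\<delta>*u) 0 0 (\<delta>*u)" "Q ** P = mk2 (\<delta>*u) 0 0 (\<delta>*u)"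
    unfolding P_def Q_def mk2_mult \<delta>_def by (simp_all add: algebra_simps)
  hence PQ: "mat_cong n (P**Q) (mat 1)" "mat_cong n (Q**P) (mat 1)"
    using u by (simp_all add: mk2_one mat_cong_mk2)
  define t where "t = 2*h+e"
  define D where "D = h*(h+e) - \<beta>*\<gamma>"
  have "mk2 a b c d ** P = P ** mk2 r (-g*D) g (r + g*t)"
    unfolding P_def mk2_mult a d \<beta> \<gamma> t_def D_def by (simp add: algebra_simps)
  moreover have "a + d = 2*r + g*t" unfolding a d t_def by (simp add: algebra_simps)
  moreover have "a*d - b*c = r^2 + r*g*t + g^2*D"
    unfolding a d t_def D_def \<beta> \<gamma> by (simp add: algebra_simps power2_eq_square)
  ultimately show ?thesis using PQ unfolding r_def by blast
qed



lemma res_eq: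
  fixes a b c d a' b' c' d' g :: int
  assumes g: "g = gcd (gcd b c) (d - a)" "g = gcd (gcd b' c') (d' - a')" "g > 0"
    and tr: "a + d = a' + d'" and dt: "a*d - b*c = a'*d' - b'*c'"
  shows "a mod g = a' mod g"
proof -
  obtain \<beta> where \<beta>: "b = g*\<beta>" using g by (metis dvd_def gcd_dvd1 dvd_trans)
  obtain \<gamma> where \<gamma>: "c = g*\<gamma>" using g by (metis dvd_def gcd_dvd1 gcd_dvd2 dvd_trans)
  obtain e where e: "d = a + g*e" using g by (metis dvd_def gcd_dvd2 diff_add_cancel add.commute)
  obtain \<beta>' where \<beta>': "b' = g*\<beta>'" using g by (metis dvd_def gcd_dvd1 dvd_trans)
  obtain \<gamma>' where \<gamma>': "c' = g*\<gamma>'" using g by (metis dvd_def gcd_dvd1 gcd_dvd2 dvd_trans)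
  obtain e' where e': "d' = a' + g*e'" using g by (metis dvd_def gcd_dvd2 diff_add_cancel add.commute)
  have "(a+d)^2 - 4*(a*d-b*c) = (a'+d')^2 - 4*(a'*d'-b'*c')" using tr dt by simp
  hence "g^2 * (e^2 + 4*\<beta>*\<gamma>) = g^2 * (e'^2 + 4*\<beta>'*\<gamma>')"
    unfolding \<beta> \<gamma> e \<beta>' \<gamma>' e' by (simp add: algebra_simps power2_eq_square)
  hence q: "e^2 + 4*\<beta>*\<gamma> = e'^2 + 4*\<beta>'*\<gamma>'" using g(3) by simp
  have "even (e^2) \<longleftrightarrow> even (e'^2)"
  proof -
    have "even (e^2) \<longleftrightarrow> even (e^2 + 4*\<beta>*\<gamma>)" by simp
    also have "\<dots> \<longleftrightarrow> even (e'^2 + 4*\<beta>'*\<gamma>')" using q by simp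
    also have "\<dots> \<longleftrightarrow> even (e'^2)" by simp
    finally show ?thesis .
  qed
  hence "even (e' - e)" by simp
  then obtain m where m: "e' - e = 2*m" by blast
  have "2*a + g*e = 2*a' + g*e'" using tr e e' by simp
  hence "2*(a - a') = 2*(g*m)" using m by (simp add: algebra_simps)
  hence "a - a' = g*m" by simp
  thus ?thesis by (metis mod_eq_dvd_iff dvd_triv_left)
qed

theorem proposition39:
  fixes M M' :: "int^2^2" and n :: int
  assumes "trace M = trace M'"
    and "det M = det M'"
    and "mgcd M = mgcd M'"
    and "n \<ge> 2"
  shows "conj_mod n M M'"
proof -
  obtain a b c d where M: "M = mk2 a b c d" using mk2_eta by blast
  obtain a' b' c' d' where M': "M' = mk2 a' b' c' d'" using mk2_eta by blast
  define g where "g = gcd (gcd b c) (d - a)"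
  have g': "g = gcd (gcd b' c') (d' - a')" using assms(3) unfolding g_def M M' mgcd_mk2 .
  have tr: "a + d = a' + d'" using assms(1) unfolding M M' mk2_trace .
  have dt: "a*d - b*c = a'*d' - b'*c'" using assms(2) unfolding M M' mk2_det .
  have n: "n \<noteq> 0" using assms(4) by simp
  show ?thesis
  proof (cases "g = 0")
    case True
    hence "b = 0" "c = 0" "d = a" "b' = 0" "c' = 0" "d' = a'" using g' unfolding g_def by auto
    hence "M = M'" using tr unfolding M M' by simp
    thus ?thesis unfolding conj_mod_def
      by (intro exI[of _ "mat 1"]) (simp add: mc_refl)
  next
    case False
    hence gp: "g > 0" unfolding g_def by (simp add: order_le_neq_trans)
    have r: "a mod g = a' mod g" using res_eq[OF g_def g' gp tr dt] .
    obtain P Q t D where 1: "mat_cong n (P**Q) (mat 1)" "mat_cong n (Q**P) (mat 1)"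
      "mk2 a b c d ** P = P ** mk2 (a mod g) (-g*D) g (a mod g + g*t)"
      "a + d = 2*(a mod g) + g*t" "a*d - b*c = (a mod g)^2 + (a mod g)*g*t + g^2*D"
      using reduce[OF g_def gp n] by blast
    obtain P' Q' t' D' where 2: "mat_cong n (P'**Q') (mat 1)" "mat_cong n (Q'**P') (mat 1)"
      "mk2 a' b' c' d' ** P' = P' ** mk2 (a' mod g) (-g*D') g (a' mod g + g*t')"
      "a' + d' = 2*(a' mod g) + g*t'" "a'*d' - b'*c' = (a' mod g)^2 + (a' mod g)*g*t' + g^2*D'"
      using reduce[OF g' gp n] by blast
    have "g*t = g*t'" using 1(4) 2(4) tr r by linarith
    hence tt: "t = t'" using gp by simp
    have "g^2*D = g^2*D'" using 1(5) 2(5) dt unfolding r tt by linarith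
    hence DD: "D = D'" using gp by simp
    show ?thesis using combine[OF 1(1) 1(2) 2(1) 2(2)] 1(3) 2(3) r tt DD unfolding M M' by simp
  qed
qed


end
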